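(* Let $\lambda>2$, $n\ge1$, $d_\sigma>0$, let $\xi=(\mathcal{N}_{1:\lambda},\mathcal{N}_2,\ldots,\mathcal{N}_n)$ be a random vector with independent coordinates, where $\mathcal{N}_{1:\lambda}$ is distributed as the minimum of $\lambda$ i.i.d. standard normal random variables and $\mathcal{N}_i\sim\mathcal{N}(0,1)$ for $i\ge2$, and let $\eta:=\exp\!\big(\frac{1}{2d_\sigma}(\|\xi\|^2/n-1)\big)$. Then there exists $\alpha>0$ such that $\mathbb{E}(\eta^{-\alpha})-1<0$. *)

theory Defs
  imports "HOL-Probability.Probability"
begin

definition std_normal :: "real measure" where
  "std_normal = density lborel std_normal_density"

definition min_normal :: "nat \<Rightarrow> real measure" where
  "min_normal lam = distr (PiM {..<lam} (\<lambda>_. std_normal)) borel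
      (\<lambda>\<omega>. Min (\<omega> ` {..<lam}))"

text \<open>Law of xi = (N_{1:lam}, N_2, ..., N_n) with independent coordinates;
  coordinates are indexed 0..n-1, coordinate 0 being N_{1:lam}.\<close>
definition xi_law :: "nat \<Rightarrow> nat \<Rightarrow> (nat \<Rightarrow> real) measure" where
  "xi_law lam n = PiM {..<n} (\<lambda>i. if i = 0 then min_normal lam else std_normal)"

definition eta :: "nat \<Rightarrow> real \<Rightarrow> (nat \<Rightarrow> real) \<Rightarrow> real" where
  "eta n d_sigma \<omega> = exp ((1 / (2 * d_sigma)) * ((\<Sum>i<n. (\<omega> i)\<^sup>2) / real n - 1))"

end

theory Submission
  imports Defs
begin

lemma ps_std: "prob_space std_normal"
  unfolding std_normal_def by (rule prob_space_normal_density) simp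

lemma std_int:
  assumes [measurable]: "f \<in> borel_measurable borel"
  shows "(\<integral>x. f x \<partial>std_normal) = (\<integral>x. std_normal_density x * f x \<partial>lborel)"
  unfolding std_normal_def by (subst integral_density) auto

lemma std_integrable:
  assumes [measurable]: "f \<in> borel_measurable borel"
  shows "integrable std_normal f \<longleftrightarrow> integrable lborel (\<lambda>x. std_normal_density x * f x)"
  unfolding std_normal_def by (subst integrable_density) auto

lemma odd_zero: "(\<integral>x. std_normal_density x * (x * \<bar>x\<bar>) \<partial>lborel) = 0"
proof -
  have "(\<integral>x. std_normal_density x * (x * \<bar>x\<bar>) \<partial>lborel) = \<bar>-1::real\<bar> *\<^sub>R (\<integral>x. std_normal_density (0 + (-1) * x) * ((0 + (-1)*x) * \<bar>0 + (-1)*x\<bar>) \<partial>lborel)"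
    by (rule lborel_integral_real_affine) simp
  also have "\<dots> = - (\<integral>x. std_normal_density x * (x * \<bar>x\<bar>) \<partial>lborel)"
    by (simp add: std_normal_density_def)
  finally show ?thesis by simp
qed

lemma exp_quad: assumes "(x::real) \<ge> 0" shows "exp (-x) \<le> 1 - x + x^2/2"
proof -
  let ?f = "\<lambda>t::real. 1 - t + t^2/2 - exp (-t)"
  have "?f 0 \<le> ?f x"
  proof (rule DERIV_nonneg_imp_nondecreasing[OF assms])
    fix t :: real assume "0 \<le> t" "t \<le> x"
    have "(?f has_real_derivative (-1 + t + exp (-t))) (at t)"
      by (auto intro!: derivative_eq_intros simp: power2_eq_square)
    moreover have "0 \<le> -1 + t + exp (-t)" using exp_ge_add_one_self[of "-t"] by linarith
    ultimately show "\<exists>y. (?f has_real_derivative y) (at t) \<and> 0 \<le> y" by blast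
  qed
  then show ?thesis by simp
qed

lemma int_dens: "integrable lborel (\<lambda>x. std_normal_density x * x ^ k)"
  by (rule integrable_std_normal_moment)
lemma int_dens_abs: "integrable lborel (\<lambda>x. std_normal_density x * \<bar>x\<bar> ^ k)"
  by (rule integrable_std_normal_moment_abs)

lemma int_dens_xabs: "integrable lborel (\<lambda>x. std_normal_density x * (x * \<bar>x\<bar>))"
proof -
  have "integrable lborel (\<lambda>x. std_normal_density x * \<bar>x\<bar> ^ 2)" by (rule int_dens_abs)
  then show ?thesis
    by (rule Bochner_Integration.integrable_bound) (auto simp: abs_mult power2_eq_square)
qed

definition neg :: "real \<Rightarrow> real" where "neg x = max 0 (- x)"

lemma neg_eq: "neg x = (\<bar>x\<bar> - x) / 2" unfolding neg_def by auto
lemma neg_sq: "(neg x)^2 = (x^2 - x * \<bar>x\<bar>)/2" unfolding neg_def by (cases "x \<ge> 0") (auto simp: power2_eq_square)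
lemma neg_meas[measurable]: "neg \<in> borel_measurable borel" unfolding neg_def by measurable

lemma m2: "(\<integral>x. x^2 \<partial>std_normal) = 1"
  using integral_std_normal_moment_even[of 1] by (subst std_int) auto

lemma m4: "(\<integral>x. x^4 \<partial>std_normal) = 3"
  using integral_std_normal_moment_even[of 2] by (subst std_int) (auto simp: fact_numeral)

lemma i2: "integrable std_normal (\<lambda>x. x^k)"
  by (subst std_integrable) (auto intro: int_dens)

lemma ineg: "integrable std_normal neg"
proof -
  have "integrable lborel (\<lambda>x. (std_normal_density x * \<bar>x\<bar>^1 - std_normal_density x * x^1)/2)"
    using int_dens[of 1] int_dens_abs[of 1]
    by (intro integrable_divide_zero Bochner_Integration.integrable_diff) auto
  then show ?thesis
    by (subst std_integrable) (auto simp: neg_eq algebra_simps)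
qed

lemma ineg2: "integrable std_normal (\<lambda>x. (neg x)^2)"
proof -
  have "integrable lborel (\<lambda>x. (std_normal_density x * x^2 - std_normal_density x * (x * \<bar>x\<bar>))/2)"
    using int_dens[of 2] int_dens_xabs
    by (intro integrable_divide_zero Bochner_Integration.integrable_diff) auto
  then show ?thesis
    by (subst std_integrable) (auto simp: neg_sq algebra_simps)
qed

lemma eneg: "(\<integral>x. neg x \<partial>std_normal) = sqrt (2/pi) / 2"
proof -
  have "(\<integral>x. neg x \<partial>std_normal) = (\<integral>x. (std_normal_density x * \<bar>x\<bar>^(2*0+1) - std_normal_density x * x^(2*0+1))/2 \<partial>lborel)"
    by (subst std_int) (auto simp: neg_eq algebra_simps)
  also have "\<dots> = sqrt (2/pi) / 2"
    apply (subst integral_divide_zero, subst Bochner_Integration.integral_diff)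
    using integral_std_normal_moment_abs_odd[of 0] integral_std_normal_moment_odd[of 0]
      int_dens[of 1] int_dens_abs[of 1]
    by (simp_all del: power_Suc)
  finally show ?thesis .
qed

lemma eneg2: "(\<integral>x. (neg x)^2 \<partial>std_normal) = 1/2"
proof -
  have "(\<integral>x. (neg x)^2 \<partial>std_normal) = (\<integral>x. (std_normal_density x * x^(2*1) - std_normal_density x * (x * \<bar>x\<bar>))/2 \<partial>lborel)"
    by (subst std_int, simp, intro Bochner_Integration.integral_cong refl, subst neg_sq) (simp add: algebra_simps power2_eq_square)
  also have "\<dots> = 1/2"
    apply (subst integral_divide_zero, subst Bochner_Integration.integral_diff)
    using integral_std_normal_moment_even[of 1] odd_zero int_dens[of 2] int_dens_xabs
    by simp_all
  finally show ?thesis .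
qed


lemma prod_int:
  fixes M :: "nat \<Rightarrow> real measure" and f :: "nat \<Rightarrow> real \<Rightarrow> real"
  assumes ps: "\<And>i. prob_space (M i)" and fin: "finite I"
    and int: "\<And>i. i \<in> I \<Longrightarrow> integrable (M i) (f i)"
  shows "has_bochner_integral (PiM I M) (\<lambda>\<omega>. \<Prod>i\<in>I. f i (\<omega> i)) (\<Prod>i\<in>I. integral\<^sup>L (M i) (f i))"
proof -
  have "product_sigma_finite M"
    unfolding product_sigma_finite_def using ps prob_space_imp_sigma_finite by blast
  then interpret product_sigma_finite M .
  show ?thesis
    using product_integral_prod[OF fin int] product_integrable_prod[OF fin int]
    by (simp add: has_bochner_integral_iff)
qed

lemma std_const[simp]: "integrable std_normal (\<lambda>_. c::real)"
proof -
  interpret prob_space std_normal by (rule ps_std)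
  show ?thesis by simp
qed

abbreviation PP :: "nat \<Rightarrow> (nat \<Rightarrow> real) measure" where
  "PP lam \<equiv> PiM {..<lam} (\<lambda>_. std_normal)"

lemma prod_delta1:
  assumes "finite S" "i \<in> S"
  shows "(\<Prod>k\<in>S. (if k = i then h else (\<lambda>_. 1::real)) (\<omega> k)) = h (\<omega> i)"
  using assms by (subst prod.remove[of S i]) auto

lemma prod_delta2:
  assumes "finite S" "i \<in> S" "j \<in> S" "i \<noteq> j"
  shows "(\<Prod>k\<in>S. (if k = i then g else if k = j then h else (\<lambda>_. 1::real)) (\<omega> k)) = g (\<omega> i) * h (\<omega> j)"
proof -
  have "(\<Prod>k\<in>S. (if k = i then g else if k = j then h else (\<lambda>_. 1::real)) (\<omega> k)) =
     (\<Prod>k\<in>{i,j}. (if k = i then g else if k = j then h else (\<lambda>_. 1::real)) (\<omega> k))"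
    by (rule prod.mono_neutral_right) (use assms in auto)
  then show ?thesis using assms by simp
qed

lemma hb1:
  fixes h :: "real \<Rightarrow> real"
  assumes "i < lam" "integrable std_normal h"
  shows "has_bochner_integral (PP lam) (\<lambda>\<omega>. h (\<omega> i)) (integral\<^sup>L std_normal h)"
proof -
  have "has_bochner_integral (PP lam) (\<lambda>\<omega>. \<Prod>k\<in>{..<lam}. (if k = i then h else (\<lambda>_. 1)) (\<omega> k))
      (\<Prod>k\<in>{..<lam}. integral\<^sup>L std_normal (if k = i then h else (\<lambda>_. 1)))"
    using assms ps_std by (intro prod_int) auto
  moreover have "(\<Prod>k\<in>{..<lam}. integral\<^sup>L std_normal (if k = i then h else (\<lambda>_. 1))) = integral\<^sup>L std_normal h"
  proof -
    have "(\<Prod>k\<in>{..<lam}. integral\<^sup>L std_normal (if k = i then h else (\<lambda>_. 1))) = (\<Prod>k\<in>{i}. integral\<^sup>L std_normal (if k = i then h else (\<lambda>_. 1)))"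
      by (rule prod.mono_neutral_right) (use assms in \<open>auto simp: prob_space.prob_space[OF ps_std]\<close>)
    then show ?thesis by simp
  qed
  ultimately show ?thesis using prod_delta1[of "{..<lam}" i h] assms by simp
qed

lemma hb2:
  fixes g h :: "real \<Rightarrow> real"
  assumes "i < lam" "j < lam" "i \<noteq> j" "integrable std_normal g" "integrable std_normal h"
  shows "has_bochner_integral (PP lam) (\<lambda>\<omega>. g (\<omega> i) * h (\<omega> j)) (integral\<^sup>L std_normal g * integral\<^sup>L std_normal h)"
proof -
  have "has_bochner_integral (PP lam) (\<lambda>\<omega>. \<Prod>k\<in>{..<lam}. (if k = i then g else if k = j then h else (\<lambda>_. 1)) (\<omega> k))
      (\<Prod>k\<in>{..<lam}. integral\<^sup>L std_normal (if k = i then g else if k = j then h else (\<lambda>_. 1)))"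
    using assms ps_std by (intro prod_int) auto
  moreover have "(\<Prod>k\<in>{..<lam}. integral\<^sup>L std_normal (if k = i then g else if k = j then h else (\<lambda>_. 1))) = integral\<^sup>L std_normal g * integral\<^sup>L std_normal h"
  proof -
    have "(\<Prod>k\<in>{..<lam}. integral\<^sup>L std_normal (if k = i then g else if k = j then h else (\<lambda>_. 1))) = (\<Prod>k\<in>{i,j}. integral\<^sup>L std_normal (if k = i then g else if k = j then h else (\<lambda>_. 1)))"
      by (rule prod.mono_neutral_right) (use assms in \<open>auto simp: prob_space.prob_space[OF ps_std]\<close>)
    then show ?thesis using assms by simp
  qed
  ultimately show ?thesis using prod_delta2[of "{..<lam}" i j g h] assms by simp
qed


definition G3 :: "real \<Rightarrow> real \<Rightarrow> real \<Rightarrow> real" where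
  "G3 a b c = a^2 + b^2 + c^2 - a*b - b*c - a*c"

lemma Gmax: assumes "0 \<le> b" "b \<le> a" "0 \<le> c" "c \<le> a" shows "G3 a b c \<le> a^2"
proof -
  have "b*b \<le> a*b" using assms by (intro mult_right_mono) auto
  moreover have "c*c \<le> a*c" using assms by (intro mult_right_mono) auto
  moreover have "0 \<le> b*c" using assms by simp
  ultimately show ?thesis unfolding G3_def by (simp add: power2_eq_square)
qed

lemma G_nonneg: "0 \<le> G3 a b c"
proof -
  have "2 * G3 a b c = (a-b)^2 + (b-c)^2 + (a-c)^2" unfolding G3_def by (simp add: power2_eq_square algebra_simps)
  moreover have "0 \<le> (a-b)^2 + (b-c)^2 + (a-c)^2" by simp
  ultimately show ?thesis by linarith
qed

lemma G_upper: assumes "0 \<le> a" "0 \<le> b" "0 \<le> c" shows "G3 a b c \<le> a^2 + b^2 + c^2"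
proof -
  have "0 \<le> a*b" "0 \<le> b*c" "0 \<le> a*c" using assms by auto
  then show ?thesis unfolding G3_def by linarith
qed

lemma sq_sum3: "((a::real)^2 + b^2 + c^2)^2 \<le> 3 * (a^4 + b^4 + c^4)"
proof -
  have "3 * (a^4 + b^4 + c^4) - (a^2 + b^2 + c^2)^2 = (a^2-b^2)^2 + (b^2-c^2)^2 + (a^2-c^2)^2"
    by (simp add: power2_eq_square algebra_simps power4_eq_xxxx)
  moreover have "0 \<le> (a^2-b^2)^2 + (b^2-c^2)^2 + (a^2-c^2)^2" by simp
  ultimately show ?thesis by linarith
qed

lemma neg_nonneg: "0 \<le> neg x" unfolding neg_def by simp

lemma neg_le: "m \<le> x \<Longrightarrow> neg x \<le> \<bar>m\<bar>" unfolding neg_def by auto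

lemma neg4: "(neg x)^4 \<le> x^4"
proof -
  have "neg x \<le> \<bar>x\<bar>" using neg_le[of x x] by simp
  then have "(neg x)^4 \<le> \<bar>x\<bar>^4" by (intro power_mono) (auto simp: neg_nonneg)
  then show ?thesis by simp
qed

lemma G_le: assumes "m \<le> x" "m \<le> y" "m \<le> z" shows "G3 (neg x) (neg y) (neg z) \<le> m^2"
proof -
  let ?a = "neg x" and ?b = "neg y" and ?c = "neg z"
  have bnd: "?a \<le> \<bar>m\<bar>" "?b \<le> \<bar>m\<bar>" "?c \<le> \<bar>m\<bar>" using assms neg_le by auto
  have nn: "0 \<le> ?a" "0 \<le> ?b" "0 \<le> ?c" by (auto simp: neg_nonneg)
  have sq: "t^2 \<le> m^2" if "0 \<le> t" "t \<le> \<bar>m\<bar>" for t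
    using that power_mono[of t "\<bar>m\<bar>" 2] by simp
  consider "?b \<le> ?a \<and> ?c \<le> ?a" | "?a \<le> ?b \<and> ?c \<le> ?b" | "?a \<le> ?c \<and> ?b \<le> ?c" by linarith
  then show ?thesis
  proof cases
    case 1 then show ?thesis using Gmax[of ?b ?a ?c] nn sq[of ?a] bnd by linarith
  next
    case 2
    have "G3 ?a ?b ?c = G3 ?b ?a ?c" unfolding G3_def by (simp add: algebra_simps)
    then show ?thesis using 2 Gmax[of ?a ?b ?c] nn sq[of ?b] bnd by linarith
  next
    case 3
    have "G3 ?a ?b ?c = G3 ?c ?a ?b" unfolding G3_def by (simp add: algebra_simps)
    then show ?thesis using 3 Gmax[of ?a ?c ?b] nn sq[of ?c] bnd by linarith
  qed
qed

lemma pointwise: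
  assumes c: "c > 0" and "m \<le> x" "m \<le> y" "m \<le> z"
  shows "exp (- c * m^2) \<le> 1 - c * G3 (neg x) (neg y) (neg z) + 3/2 * c^2 * (x^4 + y^4 + z^4)"
proof -
  let ?G = "G3 (neg x) (neg y) (neg z)"
  have G0: "0 \<le> ?G" by (rule G_nonneg)
  have "exp (- c * m^2) \<le> exp (- (c * ?G))"
    using G_le[OF assms(2-4)] c by (simp add: mult_left_mono)
  also have "\<dots> \<le> 1 - c * ?G + (c * ?G)^2 / 2"
    using G0 c by (intro exp_quad) simp
  also have "(c * ?G)^2 / 2 \<le> 3/2 * c^2 * (x^4 + y^4 + z^4)"
  proof -
    have "?G^2 \<le> ((neg x)^2 + (neg y)^2 + (neg z)^2)^2"
      using G0 G_upper[of "neg x" "neg y" "neg z"] by (intro power_mono) (auto simp: neg_nonneg)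
    also have "\<dots> \<le> 3 * ((neg x)^4 + (neg y)^4 + (neg z)^4)" by (rule sq_sum3)
    also have "\<dots> \<le> 3 * (x^4 + y^4 + z^4)" using neg4[of x] neg4[of y] neg4[of z] by simp
    finally have "?G^2 \<le> 3 * (x^4 + y^4 + z^4)" .
    then have "c^2 * ?G^2 \<le> c^2 * (3 * (x^4 + y^4 + z^4))" by (intro mult_left_mono) auto
    moreover have "(c * ?G)^2 / 2 = c^2 * ?G^2 / 2" by (simp add: power_mult_distrib)
    ultimately show ?thesis by linarith
  qed
  finally show ?thesis by simp
qed


lemma ps_PP: "prob_space (PP lam)"
  by (rule prob_space_PiM) (rule ps_std)

lemma A_bound:
  assumes lam: "lam \<ge> 3" and c: "c > 0"
  shows "(\<integral>x. exp (- c * x^2) \<partial>min_normal lam) \<le> 1 - c * (3/2 - 3/(2*pi)) + 27/2 * c^2"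
proof -
  interpret P: prob_space "PP lam" by (rule ps_PP)
  have meas[measurable]: "(\<lambda>\<omega>. Min (\<omega> ` {..<lam})) \<in> borel_measurable (PP lam)"
  proof -
    have "(\<lambda>i. (\<lambda>\<omega>. \<omega> i)) i \<in> borel_measurable (PP lam)" if "i \<in> {..<lam}" for i
      using that measurable_component_singleton[of i "{..<lam}" "\<lambda>_. std_normal"] by (simp add: std_normal_def)
    from borel_measurable_Min[of "{..<lam}" "\<lambda>i \<omega>. \<omega> i", OF _ this] show ?thesis by simp
  qed
  have eq: "(\<integral>x. exp (- c * x^2) \<partial>min_normal lam) = (\<integral>\<omega>. exp (- c * (Min (\<omega> ` {..<lam}))^2) \<partial>PP lam)"
    unfolding min_normal_def by (rule integral_distr) auto
  let ?R = "\<lambda>\<omega>. 1 - c * G3 (neg (\<omega> 0)) (neg (\<omega> 1)) (neg (\<omega> 2)) + 3/2 * c^2 * ((\<omega> 0)^4 + (\<omega> 1)^4 + (\<omega> 2)^4)"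
  let ?e = "sqrt (2/pi)/2"
  have e2: "?e * ?e = 1/(2*pi)" by (simp add: real_sqrt_mult[symmetric])
  have h1: "has_bochner_integral (PP lam) (\<lambda>\<omega>. 1) (1::real)"
    using hb1[of 0 lam "\<lambda>_. 1"] lam prob_space.prob_space[OF ps_std] by simp
  have hn2: "has_bochner_integral (PP lam) (\<lambda>\<omega>. (neg (\<omega> i))^2) (1/2)" if "i < lam" for i
    using hb1[of i lam "\<lambda>x. (neg x)^2"] that ineg2 eneg2 by simp
  have hp: "has_bochner_integral (PP lam) (\<lambda>\<omega>. neg (\<omega> i) * neg (\<omega> j)) (?e * ?e)"
    if "i < lam" "j < lam" "i \<noteq> j" for i j
    using hb2[of i lam j neg neg] that ineg eneg by simp
  have h4: "has_bochner_integral (PP lam) (\<lambda>\<omega>. (\<omega> i)^4) 3" if "i < lam" for i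
    using hb1[of i lam "\<lambda>x. x^4"] that i2 m4 by simp
  have "has_bochner_integral (PP lam) ?R (1 - c * (1/2 + 1/2 + 1/2 - ?e*?e - ?e*?e - ?e*?e) + 3/2*c^2*(3+3+3))"
    unfolding G3_def
    by (intro has_bochner_integral_add has_bochner_integral_diff has_bochner_integral_mult_right h1 hn2 hp h4)
       (use lam in auto)
  then have hR: "has_bochner_integral (PP lam) ?R (1 - c * (3/2 - 3/(2*pi)) + 27/2 * c^2)"
    using e2 by simp
  have "(\<integral>\<omega>. exp (- c * (Min (\<omega> ` {..<lam}))^2) \<partial>PP lam) \<le> (\<integral>\<omega>. ?R \<omega> \<partial>PP lam)"
  proof (rule integral_mono)
    show "integrable (PP lam) ?R" using hR by (auto simp: has_bochner_integral_iff)
    show "integrable (PP lam) (\<lambda>\<omega>. exp (- c * (Min (\<omega> ` {..<lam}))^2))"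
      by (rule P.integrable_const_bound[where B=1]) (use c in auto)
    fix \<omega> assume "\<omega> \<in> space (PP lam)"
    have "Min (\<omega> ` {..<lam}) \<le> \<omega> i" if "i < lam" for i using that by (intro Min_le) auto
    then show "exp (- c * (Min (\<omega> ` {..<lam}))^2) \<le> ?R \<omega>"
      using lam by (intro pointwise c) auto
  qed
  also have "\<dots> = 1 - c * (3/2 - 3/(2*pi)) + 27/2 * c^2" using hR by (rule has_bochner_integral_integral_eq)
  finally show ?thesis using eq by simp
qed


lemma std_meas: "f \<in> borel_measurable borel \<Longrightarrow> f \<in> borel_measurable std_normal"
  by (simp add: std_normal_def)

lemma B_bound:
  assumes c: "c > 0"
  shows "(\<integral>x. exp (- c * x^2) \<partial>std_normal) \<le> 1 - c + 3/2 * c^2"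
proof -
  interpret prob_space std_normal by (rule ps_std)
  have "(\<integral>x. exp (- c * x^2) \<partial>std_normal) \<le> (\<integral>x. 1 - c * x^2 + c^2/2 * x^4 \<partial>std_normal)"
  proof (rule integral_mono)
    show "integrable std_normal (\<lambda>x. 1 - c * x^2 + c^2/2 * x^4)" using i2 by auto
    have mm: "(\<lambda>x. exp (- c * x^2)) \<in> borel_measurable std_normal" by (rule std_meas) measurable
    show "integrable std_normal (\<lambda>x. exp (- c * x^2))"
      by (rule integrable_const_bound[where B=1, OF _ mm]) (use c in auto)
    fix x :: real
    have "exp (- (c * x^2)) \<le> 1 - c*x^2 + (c*x^2)^2/2" using c by (intro exp_quad) simp
    then show "exp (- c * x^2) \<le> 1 - c * x^2 + c^2/2 * x^4" by (simp add: power_mult_distrib power2_eq_square power4_eq_xxxx mult_ac)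
  qed
  also have "\<dots> = 1 - c + 3/2 * c^2"
    using i2[of 2] i2[of 4] m2 m4 prob_space by simp
  finally show ?thesis .
qed

lemma final_ineq:
  fixes A B c K \<gamma> :: real and m :: nat
  assumes A0: "0 \<le> A" and A1: "A \<le> 1 - c*\<gamma> + K*c^2" and B0: "0 \<le> B" and B1: "B \<le> 1 - c + 3/2*c^2"
    and K: "K \<ge> 0" and \<gamma>: "\<gamma> > 1" and c: "c = (\<gamma> - 1) / (2 * (K + 3/2 * real m + 1))"
  shows "exp (c * (real m + 1)) * (A * B^m) < 1"
proof -
  define L where "L = K + 3/2 * real m"
  have L0: "L \<ge> 0" using K by (simp add: L_def)
  have cpos: "c > 0" using c \<gamma> L0 by (simp add: L_def)
  have "A \<le> exp (- c*\<gamma> + K*c^2)" using A1 exp_ge_add_one_self[of "- c*\<gamma> + K*c^2"] by linarith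
  moreover have "B \<le> exp (- c + 3/2*c^2)" using B1 exp_ge_add_one_self[of "- c + 3/2*c^2"] by linarith
  then have "B^m \<le> exp (- c + 3/2*c^2) ^ m" using B0 by (intro power_mono) auto
  then have Bm: "B^m \<le> exp (real m * (- c + 3/2*c^2))" by (simp add: exp_of_nat_mult)
  ultimately have "A * B^m \<le> exp (- c*\<gamma> + K*c^2) * exp (real m * (- c + 3/2*c^2))"
    using A0 B0 by (intro mult_mono) auto
  then have "exp (c * (real m + 1)) * (A * B^m) \<le> exp (c * (real m + 1)) * (exp (- c*\<gamma> + K*c^2) * exp (real m * (- c + 3/2*c^2)))"
    by (intro mult_left_mono) auto
  also have "\<dots> = exp (- c * (\<gamma> - 1) + c^2 * L)"
    by (simp add: exp_add[symmetric] L_def algebra_simps power2_eq_square)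
  also have "\<dots> < 1"
  proof -
    have "c * L < (\<gamma> - 1) / 2"
    proof -
      have "c * L = (\<gamma> - 1) / 2 * (L / (L + 1))" using c by (simp add: L_def field_simps)
      also have "\<dots> < (\<gamma> - 1) / 2" using L0 \<gamma> by (simp add: field_simps)
      finally show ?thesis .
    qed
    then have "c * (c * L) < c * ((\<gamma> - 1) / 2)" using cpos by simp
    then have h: "c^2 * L < c * (\<gamma> - 1) / 2" by (simp add: power2_eq_square mult.assoc)
    have "0 < c * (\<gamma> - 1)" using cpos \<gamma> by simp
    then have "- c * (\<gamma> - 1) + c^2 * L < 0" using h by linarith
    then show ?thesis by simp
  qed
  finally show ?thesis .
qed


lemma meas_Min: "(\<lambda>\<omega>. Min (\<omega> ` {..<lam})) \<in> borel_measurable (PP lam)"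
proof -
  have "(\<lambda>i. (\<lambda>\<omega>. \<omega> i)) i \<in> borel_measurable (PP lam)" if "i \<in> {..<lam}" for i
    using that measurable_component_singleton[of i "{..<lam}" "\<lambda>_. std_normal"] by (simp add: std_normal_def)
  from borel_measurable_Min[of "{..<lam}" "\<lambda>i \<omega>. \<omega> i", OF _ this] show ?thesis by simp
qed

lemma ps_min: "prob_space (min_normal lam)"
  unfolding min_normal_def by (rule prob_space.prob_space_distr[OF ps_PP meas_Min])

lemma sets_min: "sets (min_normal lam) = sets borel"
  unfolding min_normal_def by simp

lemma sets_std: "sets std_normal = sets borel"
  unfolding std_normal_def by simp

lemma int_exp:
  assumes "prob_space M" "sets M = sets borel" "c > 0"
  shows "integrable M (\<lambda>x::real. exp (- c * x^2))"
proof -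
  interpret prob_space M by fact
  have mm: "(\<lambda>x::real. exp (- c * x^2)) \<in> borel_measurable M"
    by (subst measurable_cong_sets[OF assms(2) refl]) measurable
  show ?thesis
    by (rule integrable_const_bound[where B=1, OF _ mm]) (use assms(3) in auto)
qed

theorem lemma8:
  fixes lam n :: nat and d_sigma :: real
  assumes "lam > 2" and "n \<ge> 1" and "d_sigma > 0"
  shows "\<exists>\<alpha>>0. integrable (xi_law lam n) (\<lambda>\<omega>. eta n d_sigma \<omega> powr (-\<alpha>)) \<and>
           (\<integral>\<omega>. eta n d_sigma \<omega> powr (-\<alpha>) \<partial>xi_law lam n) - 1 < 0"
proof -
  have lam: "lam \<ge> 3" using assms by simp
  define \<gamma> :: real where "\<gamma> = 3/2 - 3/(2*pi)"
  have \<gamma>1: "\<gamma> > 1" using pi_gt3 unfolding \<gamma>_def by (simp add: field_simps)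
  define K :: real where "K = 27/2"
  define m where "m = n - 1"
  have nm: "real n = real m + 1" using assms m_def by simp
  define c where "c = (\<gamma> - 1) / (2 * (K + 3/2 * real m + 1))"
  have cpos: "c > 0" using \<gamma>1 unfolding c_def K_def by simp
  define \<alpha> where "\<alpha> = 2 * d_sigma * real n * c"
  have apos: "\<alpha> > 0" using assms cpos unfolding \<alpha>_def by simp
  define M' where "M' = (\<lambda>i::nat. if i = 0 then min_normal lam else std_normal)"
  have psM: "prob_space (M' i)" for i unfolding M'_def using ps_min ps_std by simp
  have intM: "integrable (M' i) (\<lambda>x. exp (- c * x^2))" for i
    unfolding M'_def using int_exp[OF ps_min sets_min cpos] int_exp[OF ps_std sets_std cpos] by simp
  define A where "A = (\<integral>x. exp (- c * x^2) \<partial>min_normal lam)"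
  define B where "B = (\<integral>x. exp (- c * x^2) \<partial>std_normal)"
  have "has_bochner_integral (PiM {..<n} M') (\<lambda>\<omega>. \<Prod>i\<in>{..<n}. exp (- c * (\<omega> i)^2))
      (\<Prod>i\<in>{..<n}. \<integral>x. exp (- c * x^2) \<partial>M' i)"
    using prod_int[of M' "{..<n}" "\<lambda>i x. exp (- c * x^2)"] psM intM by simp
  moreover have "xi_law lam n = PiM {..<n} M'" unfolding xi_law_def M'_def by simp
  moreover have "(\<Prod>i\<in>{..<n}. \<integral>x. exp (- c * x^2) \<partial>M' i) = A * B^m"
  proof -
    have "{..<n} = insert 0 {1..<n}" using assms by auto
    then have "(\<Prod>i\<in>{..<n}. \<integral>x. exp (- c * x^2) \<partial>M' i) = (\<integral>x. exp (- c * x^2) \<partial>M' 0) * (\<Prod>i\<in>{1..<n}. \<integral>x. exp (- c * x^2) \<partial>M' i)"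
      by simp
    also have "(\<Prod>i\<in>{1..<n}. \<integral>x. exp (- c * x^2) \<partial>M' i) = (\<Prod>i\<in>{1..<n}. B)"
      by (intro prod.cong) (auto simp: M'_def B_def)
    also have "\<dots> = B^m" by (simp add: m_def)
    finally show ?thesis by (simp add: M'_def A_def)
  qed
  ultimately have hb: "has_bochner_integral (xi_law lam n) (\<lambda>\<omega>. exp (c * real n) * (\<Prod>i\<in>{..<n}. exp (- c * (\<omega> i)^2)))
      (exp (c * real n) * (A * B^m))"
    by (auto intro: has_bochner_integral_mult_right)
  have feq: "eta n d_sigma \<omega> powr (-\<alpha>) = exp (c * real n) * (\<Prod>i\<in>{..<n}. exp (- c * (\<omega> i)^2))" for \<omega>
  proof -
    define S where "S = (\<Sum>i<n. (\<omega> i)\<^sup>2)"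
    have "eta n d_sigma \<omega> powr (-\<alpha>) = exp (- \<alpha> * ((1 / (2 * d_sigma)) * (S / real n - 1)))"
      unfolding eta_def S_def by (simp add: powr_def)
    also have "- \<alpha> * ((1 / (2 * d_sigma)) * (S / real n - 1)) = c * real n + (- c * S)"
      using assms unfolding \<alpha>_def by (simp add: field_simps)
    also have "exp (c * real n + (- c * S)) = exp (c * real n) * exp (\<Sum>i<n. - c * (\<omega> i)^2)"
      by (simp add: exp_add S_def sum_distrib_left)
    also have "exp (\<Sum>i<n. - c * (\<omega> i)^2) = (\<Prod>i<n. exp (- c * (\<omega> i)^2))"
      by (rule exp_sum) simp
    finally show ?thesis by simp
  qed
  have A0: "0 \<le> A" unfolding A_def by (intro Bochner_Integration.integral_nonneg) simp
  have B0: "0 \<le> B" unfolding B_def by (intro Bochner_Integration.integral_nonneg) simp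
  have A1: "A \<le> 1 - c*\<gamma> + K*c^2" using A_bound[OF lam cpos] unfolding A_def \<gamma>_def K_def by simp
  have B1: "B \<le> 1 - c + 3/2*c^2" using B_bound[OF cpos] unfolding B_def by simp
  have lt: "exp (c * (real m + 1)) * (A * B^m) < 1"
    by (rule final_ineq[OF A0 A1 B0 B1 _ \<gamma>1 c_def]) (simp add: K_def)
  have hb': "has_bochner_integral (xi_law lam n) (\<lambda>\<omega>. eta n d_sigma \<omega> powr (-\<alpha>)) (exp (c * real n) * (A * B^m))"
    using hb by (simp add: feq)
  show ?thesis
    using hb' lt nm apos
    by (intro exI[of _ \<alpha>]) (auto simp: has_bochner_integral_iff)
qed

end
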